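(* Let $n\ge1$ and let $I=(e_1,\dots,e_n)$ be the identity matrix (standard basis). Let $W\subset\mathcal{S}^2(\mathbb{R}^n)^n$ be the subspace of $(q_1,\dots,q_n)$ such that for all $i,j=1,\dots,n$: $q_j(e_j,e_j)=0$, $\langle e_i,q_j(e_i,e_i)\rangle+\langle e_j,q_i(e_j,e_j)\rangle=0$, and $\langle e_1,q_1(e_j,e_j)\rangle=0$. If $\ker L^\Psi_I\cap W=\{0\}$, then $\ker L^\Psi_I=\operatorname{Im}L^\Phi_I$.
   Context: $\mathcal{S}^r(\mathbb{R}^n)$ denotes symmetric $r$-linear maps $(\mathbb{R}^n)^r\to\mathbb{R}^n$; $\langle\cdot,\cdot\rangle$ is the Euclidean inner product. For $v\in\mathbb{R}^n$, $Q_v(\xi,\eta)=\langle\xi,\eta\rangle v-\langle\xi,v\rangle\eta-\langle\eta,v\rangle\xi$. For $Q\in\mathcal{S}^2(\mathbb{R}^n)$ and matrices $A,C$: $Q\circ(A,C)(\xi,\eta)=Q(A\xi,C\eta)$, $A\circ Q(\xi,\eta)=A(Q(\xi,\eta))$. For $Q,Q'\in\mathcal{S}^2(\mathbb{R}^n)$, $[Q,Q'](\xi,\eta,\theta)=\{Q(\xi,Q'(\eta,\theta))+Q(\eta,Q'(\theta,\xi))+Q(\theta,Q'(\xi,\eta))\}-\{Q'(\xi,Q(\eta,\theta))+Q'(\eta,Q(\theta,\xi))+Q'(\theta,Q(\xi,\eta))\}$. For $B=(v_1,\dots,v_n)\in\mathrm{GL}_n(\mathbb{R})$, $L^\Phi_B:M_n(\mathbb{R})^2\to\mathcal{S}^2(\mathbb{R}^n)^n$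 is $L^\Phi_B(A',B'')=(A'\circ Q_{v_i}-Q_{v_i}\circ(A',I)-Q_{v_i}\circ(I,A')+Q_{\omega_i})_{1\le i\le n}$ where $B''=(\omega_1,\dots,\omega_n)$, and $L^\Psi_B(q_1,\dots,q_n)=([q_i,Q_{v_j}]-[q_j,Q_{v_i}])_{1\le i<j\le n}\in\mathcal{S}^3(\mathbb{R}^n)^{n(n-1)/2}$. Here $B=I$, so $v_i=e_i$. *)

theory Defs
  imports "HOL-Analysis.Analysis"
begin

text \<open>Dimension n is encoded by a finite, well-ordered index type 'n (n = CARD('n) \<ge> 1);
  e_i = axis i 1; the index "1" is the least element of 'n.\<close>

type_synonym 'n S2 = "real^'n \<Rightarrow> real^'n \<Rightarrow> real^'n"
type_synonym 'n S3 = "real^'n \<Rightarrow> real^'n \<Rightarrow> real^'n \<Rightarrow> real^'n"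

definition ebasis :: "'n::finite \<Rightarrow> real^'n" where
  "ebasis i = axis i 1"

definition first_idx :: "'n::{finite,wellorder}" where
  "first_idx = (LEAST i. True)"

definition symbil :: "('n::finite) S2 set" where
  "symbil = {Q. bilinear Q \<and> (\<forall>x y. Q x y = Q y x)}"

definition S2tuples :: "('n::finite \<Rightarrow> 'n S2) set" where
  "S2tuples = {q. \<forall>i. q i \<in> symbil}"

definition Qv :: "real^'n::finite \<Rightarrow> 'n S2" where
  "Qv v \<xi> \<eta> = (\<xi> \<bullet> \<eta>) *\<^sub>R v - (\<xi> \<bullet> v) *\<^sub>R \<eta> - (\<eta> \<bullet> v) *\<^sub>R \<xi>"

definition bracket :: "('n::finite) S2 \<Rightarrow> 'n S2 \<Rightarrow> 'n S3" where
  "bracket Q Q' \<xi> \<eta> \<theta> =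
     (Q \<xi> (Q' \<eta> \<theta>) + Q \<eta> (Q' \<theta> \<xi>) + Q \<theta> (Q' \<xi> \<eta>))
   - (Q' \<xi> (Q \<eta> \<theta>) + Q' \<eta> (Q \<theta> \<xi>) + Q' \<theta> (Q \<xi> \<eta>))"

text \<open>L^Phi_I (A', B''), with B'' = (omega_1, ..., omega_n) given by its columns.\<close>
definition LPhi :: "real^'n^'n \<Rightarrow> real^'n^'n \<Rightarrow> ('n::finite \<Rightarrow> 'n S2)" where
  "LPhi A B i = (\<lambda>\<xi> \<eta>. A *v (Qv (ebasis i) \<xi> \<eta>) - Qv (ebasis i) (A *v \<xi>) \<eta>
       - Qv (ebasis i) \<xi> (A *v \<eta>) + Qv (column i B) \<xi> \<eta>)"

definition LPsi :: "('n::finite \<Rightarrow> 'n S2) \<Rightarrow> 'n \<Rightarrow> 'n \<Rightarrow> 'n S3" where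
  "LPsi q i j = (\<lambda>\<xi> \<eta> \<theta>. bracket (q i) (Qv (ebasis j)) \<xi> \<eta> \<theta>
                          - bracket (q j) (Qv (ebasis i)) \<xi> \<eta> \<theta>)"

definition kerPsi :: "('n::{finite,wellorder} \<Rightarrow> 'n S2) set" where
  "kerPsi = {q \<in> S2tuples. \<forall>i j. i < j \<longrightarrow> LPsi q i j = (\<lambda>\<xi> \<eta> \<theta>. 0)}"

definition imPhi :: "('n::finite \<Rightarrow> 'n S2) set" where
  "imPhi = {LPhi A B | A B. True}"

definition Wsub :: "('n::{finite,wellorder} \<Rightarrow> 'n S2) set" where
  "Wsub = {q \<in> S2tuples. \<forall>i j.
       q j (ebasis j) (ebasis j) = 0
     \<and> ebasis i \<bullet> q j (ebasis i) (ebasis i) + ebasis j \<bullet> q i (ebasis j) (ebasis j) = 0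
     \<and> ebasis first_idx \<bullet> q first_idx (ebasis j) (ebasis j) = 0}"

end

theory Submission
  imports Defs
begin

lemma psiphi: "LPsi (LPhi A B) i j x y z = (0::real^'n::finite)"
  unfolding LPsi_def LPhi_def bracket_def Qv_def
  by (simp add: inner_diff_right inner_diff_left inner_add_left inner_add_right algebra_simps inner_commute)

lemma LPhi_bil: "bilinear (LPhi A B i)"
  unfolding bilinear_def LPhi_def Qv_def
  by (auto intro!: linearI simp: inner_diff_right inner_diff_left inner_add_left inner_add_right algebra_simps)

lemma LPhi_sym: "LPhi A B i x y = LPhi A B i y x"
  unfolding LPhi_def Qv_def
  by (simp add: algebra_simps inner_commute)

lemma LPhi_in: "LPhi A B \<in> S2tuples"
  by (simp add: S2tuples_def symbil_def LPhi_bil LPhi_sym)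

lemma LPsi_diff: "LPsi (\<lambda>i x y. q i x y - p i x y) i j x y z = LPsi q i j x y z - LPsi p i j x y z"
  unfolding LPsi_def bracket_def Qv_def
  by (simp add: inner_diff_right inner_diff_left inner_add_left inner_add_right algebra_simps)

lemma axis_comp: "axis k (1::real) $ m = (if m = k then 1 else 0)"
  by (simp add: axis_def)

lemma mv2: "(A *v (2 * x)) $ m = 2 * ((A *v x) $ m :: real)"
  by (simp add: matrix_vector_mult_def sum_distrib_left algebra_simps)

lemma LPhi_comp: "LPhi A B i (ebasis k) (ebasis k) $ m =
   A$m$i - 2*A$k$k*(if m=i then 1 else 0) + 2*A$i$k*(if m=k then 1 else 0) + B$m$i - 2*B$k$i*(if m=k then 1 else 0)"
  unfolding LPhi_def Qv_def ebasis_def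
  by (simp add: matrix_vector_mult_diff_distrib matrix_vector_mult_scaleR inner_axis_axis inner_axis inner_axis'
     matrix_vector_mult_basis column_def axis_comp mv2 cart_eq_inner_axis[symmetric] inner_commute)
lemma ebasis_inner: "ebasis i \<bullet> x = (x $ i :: real)"
  by (simp add: ebasis_def inner_axis')

lemma bil_sub: "bilinear f \<Longrightarrow> bilinear g \<Longrightarrow> bilinear (\<lambda>x y. f x y - g x y)"
  unfolding bilinear_def by (auto intro: linear_compose_sub)

theorem lemma2p13:
  assumes "kerPsi \<inter> Wsub = {(\<lambda>i \<xi> \<eta>. 0) :: 'n::{finite,wellorder} \<Rightarrow> 'n S2}"
  shows "(kerPsi :: ('n \<Rightarrow> 'n S2) set) = imPhi"
proof
  show "imPhi \<subseteq> (kerPsi :: ('n \<Rightarrow> 'n S2) set)"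
  proof
    fix x :: "'n \<Rightarrow> 'n S2"
    assume "x \<in> imPhi"
    then obtain A B where "x = LPhi A B" by (auto simp: imPhi_def)
    moreover have "LPhi A B \<in> kerPsi" by (simp add: kerPsi_def LPhi_in psiphi fun_eq_iff)
    ultimately show "x \<in> kerPsi" by simp
  qed
next
  show "(kerPsi :: ('n \<Rightarrow> 'n S2) set) \<subseteq> imPhi"
  proof
    fix q :: "'n \<Rightarrow> 'n S2"
    assume q: "q \<in> kerPsi"
    define f where "f = (first_idx::'n)"
    define d where "d i j m = q j (ebasis i) (ebasis i) $ m" for i j m
    define A where "A = (\<chi> m k. if m = k then (if m = f then 0 else -(d f f f + d m f f)/2)
         else (d m k m + d k m k + d k k m + d m m k)/8)"
    define B where "B = (\<chi> m i. if m = i then A$i$i - d i i i else d i i m - A$m$i)"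
    define r where "r = (\<lambda>i x y. q i x y - LPhi A B i x y)"
    have qS: "q \<in> S2tuples" using q by (simp add: kerPsi_def)
    have rS: "r \<in> S2tuples"
      using qS LPhi_in[of A B] unfolding S2tuples_def symbil_def r_def
      by (auto intro: bil_sub)
    have rK: "r \<in> kerPsi"
      using q rS unfolding kerPsi_def r_def
      by (auto simp: LPsi_diff psiphi fun_eq_iff)
    have rc: "r j (ebasis k) (ebasis k) $ m = d k j m - (A$m$j - 2*A$k$k*(if m=j then 1 else 0) + 2*A$j$k*(if m=k then 1 else 0) + B$m$j - 2*B$k$j*(if m=k then 1 else 0))"
      for j k m
      by (simp add: r_def d_def LPhi_comp)
    have "r \<in> Wsub"
      unfolding Wsub_def
    proof (intro CollectI conjI allI rS)
      fix i j
      show "r j (ebasis j) (ebasis j) = 0"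
        by (simp add: vec_eq_iff rc A_def B_def field_simps)
      show "ebasis i \<bullet> r j (ebasis i) (ebasis i) + ebasis j \<bullet> r i (ebasis j) (ebasis j) = 0"
        by (simp add: ebasis_inner rc A_def B_def field_simps)
      show "ebasis first_idx \<bullet> r first_idx (ebasis j) (ebasis j) = 0"
        by (simp add: ebasis_inner rc A_def B_def field_simps f_def[symmetric])
    qed
    with rK assms have "r = (\<lambda>i \<xi> \<eta>. 0)" by blast
    hence "q = LPhi A B" by (simp add: r_def fun_eq_iff)
    thus "q \<in> imPhi" by (auto simp: imPhi_def)
  qed
qed

end
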